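(* For every integer $n\ge 1$, $$\sum_{m=0}^{n-1}(3m+1)(-16)^{n-m-1}\binom{2m}{m} f_m=\binom{2n}{n}\sum_{k=0}^{n-1}\binom{n+2k}{3k}\binom{3k}{k}\binom{2k}{k}\frac{n(k-n)(-4)^{n-k}}{8(2k+1)}.$$
   Context: The Franel numbers are defined by $f_n=\sum_{k=0}^n \binom{n}{k}^3$ for integers $n\ge 0$. Binomial coefficients $\binom{a}{b}$ for nonnegative integers $a,b$ are the usual ones, with $\binom{a}{b}=0$ when $b>a$. *)

theory Defs
  imports Complex_Main
begin

definition franel :: "nat \<Rightarrow> nat" where
  "franel n = (\<Sum>k=0..n. (n choose k) ^ 3)"

end

theory Submission
  imports Defs
begin



definition pp :: "rat \<Rightarrow> rat \<Rightarrow> rat" where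
 "pp x y = -72+78*y-30*y^2+4*y^3 - x*(128-93*y+18*y^2) - x^2*(74-27*y) - 14*x^3"
lemma polyF0:
  fixes d y b :: rat assumes "d \<noteq> 0"
  shows "(d+1)^2*((d+1)*b)^3 - (7*(d-1)^2+21*(d-1)+16)*(b*(d+1-y))^3 - 8*d^2*((d-y)*(b*(d+1-y))/d)^3
     = (b*(d+1-y))^3 * pp (d-1) (y+1)/d - (y*b)^3 * pp (d-1) y/d"
  using assms unfolding pp_def power_divide by (simp add: field_simps) algebra
lemma polyF:
  fixes x y b :: rat assumes "x+1 \<noteq> 0"
  shows "(x+2)^2*((x+2)*b)^3 - (7*x^2+21*x+16)*(b*(x+2-y))^3 - 8*(x+1)^2*((x+1-y)*(b*(x+2-y))/(x+1))^3
     = (b*(x+2-y))^3 * pp x (y+1)/(x+1) - (y*b)^3 * pp x y/(x+1)"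
proof -
  have e1: "x+1+1 = x+2" "x+1-1 = x" "x+1+1-y = x+2-y" by simp_all
  show ?thesis using polyF0[where d="x+1" and y=y and b=b, unfolded e1] assms by blast
qed

definition GF :: "nat \<Rightarrow> nat \<Rightarrow> rat" where
 "GF n k = (if k = 0 then 0 else of_nat (Suc n choose (k-1))^3 * pp (of_nat n) (of_nat k) / (of_nat n + 1))"

lemma franel_step:
  assumes "k \<le> n+2"
  shows "(of_nat n+2)^2 * of_nat (n+2 choose k)^3 - (7*of_nat n^2+21*of_nat n+16) * of_nat (n+1 choose k)^3
        - 8*(of_nat n+1)^2 * of_nat (n choose k)^3 = GF n (Suc k) - GF n k"
proof -
  define B where "B = (of_nat (n+2 choose k) :: rat)"
  define x where "x = (of_nat n :: rat)"
  define y where "y = (of_nat k :: rat)"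
  have h1: "(n+2-k)*(n+2 choose k) = (n+2)*(n+1 choose k)"
    using binomial_absorb_comp[of "n+2" k] by simp
  have c1: "(of_nat (n+1 choose k)::rat) = B*(x+2-y)/(x+2)"
  proof -
    have "(of_nat (n+2-k)::rat) * B = of_nat (n+2) * of_nat (n+1 choose k)"
      unfolding B_def by (metis h1 of_nat_mult)
    then have "(of_nat (n+2-k)::rat) * B = (x+2) * of_nat (n+1 choose k)" unfolding x_def by simp
    moreover have "(of_nat (n+2-k)::rat) = x+2-y" using assms unfolding x_def y_def by (simp add: of_nat_diff)
    ultimately have e: "(x+2-y) * B = (x+2) * of_nat (n+1 choose k)" by simp
    have "x+2 \<noteq> 0" unfolding x_def by (simp add: add_nonneg_eq_0_iff)
    then show ?thesis using e by (simp add: field_simps)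
  qed
  have h0: "(n+1-k)*(n+1 choose k) = (n+1)*(n choose k)"
    using binomial_absorb_comp[of "n+1" k] by simp
  have c0: "(of_nat (n choose k)::rat) = (x+1-y)*(B*(x+2-y)/(x+2))/(x+1)"
  proof (cases "k \<le> n+1")
    case True
    have "(of_nat (n+1-k)::rat) * of_nat (n+1 choose k) = of_nat (n+1) * of_nat (n choose k)"
      by (metis h0 of_nat_mult)
    then have "(of_nat (n+1-k)::rat) * of_nat (n+1 choose k) = (x+1) * of_nat (n choose k)" unfolding x_def by simp
    moreover have "(of_nat (n+1-k)::rat) = x+1-y" using True unfolding x_def y_def by (simp add: of_nat_diff)
    ultimately have e: "(x+1-y) * of_nat (n+1 choose k) = (x+1) * of_nat (n choose k)" by simp
    have "x+1 \<noteq> 0" unfolding x_def by (simp_all add: add_nonneg_eq_0_iff)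
    then have "(of_nat (n choose k)::rat) = (x+1-y) * of_nat (n+1 choose k) / (x+1)" using e by (simp add: field_simps)
    then show ?thesis using c1 by simp
  next
    case False
    then have "k = n+2" using assms by simp
    then show ?thesis unfolding x_def y_def by simp
  qed
  have cm: "GF n k = (y*B/(x+2))^3 * pp x y / (x+1)"
  proof (cases k)
    case 0 then show ?thesis unfolding GF_def y_def by simp
  next
    case (Suc j)
    have hh: "Suc j * (n+2 choose Suc j) = (n+2) * (n+1 choose j)"
      using binomial_absorption[of j "n+2"] by simp
    have "(of_nat (Suc j)::rat) * of_nat (n+2 choose Suc j) = of_nat (n+2) * of_nat (n+1 choose j)"
      by (metis hh of_nat_mult)
    then have "y * B = (x+2) * of_nat (n+1 choose j)" unfolding B_def x_def y_def Suc by simp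
    moreover have "x+2 \<noteq> 0" unfolding x_def by (simp add: add_nonneg_eq_0_iff)
    ultimately have "(of_nat (n+1 choose j)::rat) = y*B/(x+2)" by (simp add: field_simps)
    then show ?thesis unfolding GF_def Suc x_def y_def by (simp add: add.commute)
  qed
  have cp: "GF n (Suc k) = (B*(x+2-y)/(x+2))^3 * pp x (y+1) / (x+1)"
    unfolding GF_def using c1 by (simp add: x_def y_def add.commute)
  define b where "b = B/(x+2)"
  have x2: "x+2 \<noteq> 0" "x+1 \<noteq> 0" unfolding x_def by (simp_all add: add_nonneg_eq_0_iff)
  have bB: "B = (x+2)*b" using x2 unfolding b_def by simp
  have q1: "B*(x+2-y)/(x+2) = b*(x+2-y)" "y*B/(x+2) = y*b" using x2 unfolding b_def by simp_all
  show ?thesis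
    unfolding cm cp c0 c1 B_def[symmetric] x_def[symmetric] q1
    unfolding bB q1 using polyF[OF x2(2), of b y] by (simp add: mult.commute)
qed




definition g :: "nat \<Rightarrow> nat \<Rightarrow> rat" where
 "g n k = of_nat ((n+2*k choose 3*k) * (3*k choose k) * (2*k choose k)) * (-4)^(n-k)"

lemma a_fact:
  assumes "k \<le> n"
  shows "(of_nat ((n+2*k choose 3*k) * (3*k choose k) * (2*k choose k)) :: rat)
        = fact (n+2*k) / (fact (n-k) * fact k ^ 3)"
proof -
  have 1: "(of_nat (n+2*k choose 3*k)::rat) = fact (n+2*k) / (fact (3*k) * fact (n-k))"
    using binomial_fact[of "3*k" "n+2*k"] assms by simp
  have 2: "(of_nat (3*k choose k)::rat) = fact (3*k) / (fact k * fact (2*k))"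
    using binomial_fact[of "k" "3*k"] by simp
  have 3: "(of_nat (2*k choose k)::rat) = fact (2*k) / (fact k * fact k)"
    using binomial_fact[of "k" "2*k"] by simp
  show ?thesis unfolding of_nat_mult 1 2 3 by (simp add: field_simps power3_eq_cube)
qed

lemma g_zero: "n < k \<Longrightarrow> g n k = 0"
  unfolding g_def by simp

lemma g_fact: "k \<le> n \<Longrightarrow> g n k = fact (n+2*k) / (fact (n-k) * fact k ^ 3) * (-4)^(n-k)"
  unfolding g_def using a_fact by simp

lemma R1: "of_nat (m+1-k) * g (m+1) k = -4 * (of_nat m + 1 + 2 * of_nat k) * g m k"
proof (cases "k \<le> m")
  case True
  then obtain j where m: "m = k + j" using le_Suc_ex by blast
  have T2: "k \<le> m+1" using True by simp
  have e1: "m+1+2*k = Suc (j+3*k)" "m+1-k = Suc j" "m+2*k = j+3*k" "m - k = j" using m by simp_all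
  define A where "A = (fact (j+3*k) :: rat)"
  define F where "F = (fact j :: rat)"
  define K where "K = (fact k ^ 3 :: rat)"
  define P where "P = ((-4) ^ j :: rat)"
  define s where "s = (of_nat (Suc j) :: rat)"
  have nz: "s \<noteq> 0" "F \<noteq> 0" "K \<noteq> 0" unfolding s_def F_def K_def by simp_all
  have a: "g (m+1) k = (of_nat (Suc (j+3*k)) * A) / ((s * F) * K) * ((-4) * P)"
    unfolding g_fact[OF T2] e1 A_def F_def K_def P_def s_def
    by (simp only: fact_Suc power_Suc)
  have b: "g m k = A / (F*K) * P"
    unfolding g_fact[OF True] e1 A_def F_def K_def P_def by simp
  have c: "(of_nat (Suc (j+3*k)) :: rat) = of_nat m + 1 + 2 * of_nat k" unfolding m by simp
  show ?thesis unfolding a b e1 c s_def[symmetric] using nz by (simp add: field_simps)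
next
  case False
  then show ?thesis using g_zero[of m k] by simp
qed

lemma R2: "(of_nat k + 1)^3 * g (n+2) (k+1) = (of_nat n + 2*of_nat k + 2) * (of_nat n + 2*of_nat k + 3)
            * (of_nat n + 2*of_nat k + 4) * g (n+1) k"
proof (cases "k \<le> n+1")
  case True
  then obtain j where m: "n+1 = k + j" using le_Suc_ex by blast
  have e1: "n+2+2*(k+1) = Suc (Suc (Suc (j+3*k)))" "n+2-(k+1) = j" "n+1+2*k = j+3*k" "n+1-k = j" using m by simp_all
  have k1: "k+1 \<le> n+2" using True by simp
  define A where "A = (fact (j+3*k) :: rat)"
  define F where "F = (fact j :: rat)"
  define K where "K = (fact k :: rat)"
  define P where "P = ((-4) ^ j :: rat)"
  define t where "t = (of_nat (Suc k) :: rat)"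
  have nz: "t \<noteq> 0" "F \<noteq> 0" "K \<noteq> 0" unfolding t_def F_def K_def by simp_all
  have a: "g (n+2) (k+1) = (of_nat (Suc (Suc (Suc (j+3*k)))) * (of_nat (Suc (Suc (j+3*k))) * (of_nat (Suc (j+3*k)) * A)))
       / (F * (t * K)^3) * P"
    unfolding g_fact[OF k1] e1 A_def F_def K_def P_def t_def
    by (simp only: fact_Suc Suc_eq_plus1[symmetric])
  have b: "g (n+1) k = A / (F*K^3) * P"
    unfolding g_fact[OF True] e1 A_def F_def K_def P_def by simp
  have jn: "(of_nat (Suc (j+3*k)) :: rat) = of_nat n + 2*of_nat k + 2"
    using arg_cong[OF m, of "of_nat :: nat \<Rightarrow> rat"] by simp
  have c: "(of_nat k + 1 :: rat) = t" unfolding t_def by simp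
  have d: "(of_nat (Suc (Suc (j+3*k))) :: rat) = of_nat n + 2*of_nat k + 3"
          "(of_nat (Suc (Suc (Suc (j+3*k)))) :: rat) = of_nat n + 2*of_nat k + 4"
    using jn by (simp_all add: of_nat_Suc[of "Suc _"] of_nat_Suc[of "j+3*k"])
  show ?thesis unfolding a b c d jn using nz by (simp add: field_simps)
next
  case False
  then show ?thesis using g_zero[of "n+1" k] g_zero[of "n+2" "k+1"] by simp
qed




definition H :: "nat \<Rightarrow> nat \<Rightarrow> rat" where
 "H n k = (if k = 0 then 0 else -3*(3*of_nat n+5)*(of_nat n+2*of_nat k)* g (n+1) (k-1))"

lemma canc:
  fixes p q r w Z :: rat assumes "p\<noteq>0" "q*(p*r*w) = -4*p*Z" shows "Z = q*r*w/(-4)"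
proof -
  have "p*(q*r*w) = p*(-4*Z)" using assms(2) by (simp add: algebra_simps)
  then have "q*r*w = -4*Z" using mult_left_cancel[OF assms(1)] by blast
  then show ?thesis by simp
qed

lemma polyG:
  fixes x y w :: rat
  shows "(x+2)^2*((x+2*y+1)*(x+2*y+2)*w) - (7*x^2+21*x+16)*((x+2-y)*(x+2*y+1)*w/(-4))
     - 8*(x+1)^2*((x+1-y)*((x+2-y)*w/(-4))/(-4))
   = -3*(3*x+5)*(x+2*(y+1))*((x+2-y)*(x+2*y+1)*w/(-4)) - (-3*(3*x+5)*(y^3*w))"
  by (simp add: field_simps) algebra

lemma g_step:
  assumes "k \<le> n+2"
  shows "(of_nat n+2)^2 * g (n+2) k - (7*of_nat n^2+21*of_nat n+16) * g (n+1) k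
        - 8*(of_nat n+1)^2 * g n k = H n (Suc k) - H n k"
proof -
  define x where "x = (of_nat n :: rat)"
  define y where "y = (of_nat k :: rat)"
  define Y where "Y = g (n+2) k"
  define w where "w = Y/((x+2*y+1)*(x+2*y+2))"
  have p1: "x+2*y+1 \<noteq> 0" "x+2*y+2 \<noteq> 0" "x+2+2*y \<noteq> 0" "x+1+2*y \<noteq> 0" unfolding x_def y_def
    by (simp_all add: add_nonneg_eq_0_iff)
  have pr: "(x+2*y+1)*(x+2*y+2) \<noteq> 0" using p1 by simp
  have "Y = ((x+2*y+1)*(x+2*y+2))*w" unfolding w_def using pr by simp
  then have Yw: "Y = (x+2+2*y)*(x+2*y+1)*w" by (simp add: algebra_simps)
  have r1: "of_nat (n+2-k) * g (n+2) k = -4 * (x+2+2*y) * g (n+1) k"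
    using R1[of "n+1" k] unfolding x_def y_def by (simp add: algebra_simps)
  have o1: "(of_nat (n+2-k)::rat) = x+2-y" using assms unfolding x_def y_def by (simp add: of_nat_diff)
  have Z: "g (n+1) k = (x+2-y)*(x+2*y+1)*w/(-4)"
    using canc[OF p1(3), of "x+2-y" "x+2*y+1" w "g (n+1) k"] r1 unfolding o1 Y_def[symmetric] Yw
    by simp
  have Z0: "g n k = (x+1-y)*((x+2-y)*w/(-4))/(-4)"
  proof (cases "k \<le> n+1")
    case True
    have r0: "of_nat (n+1-k) * g (n+1) k = -4 * (x+1+2*y) * g n k"
      using R1[of n k] unfolding x_def y_def by (simp add: algebra_simps)
    have o0: "(of_nat (n+1-k)::rat) = x+1-y" using True unfolding x_def y_def by (simp add: of_nat_diff)
    have "(x+1-y) * ((x+1+2*y) * ((x+2-y)*w/(-4))) = -4 * (x+1+2*y) * g n k"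
      using r0 unfolding o0 Z by (simp add: algebra_simps)
    from canc[OF p1(4), of "x+1-y" "(x+2-y)*w/(-4)" 1 "g n k"] this show ?thesis by (simp add: algebra_simps)
  next
    case False
    then have "k = n+2" using assms by simp
    then show ?thesis unfolding x_def y_def using g_zero[of n k] by simp
  qed
  have Hk: "H n k = -3*(3*x+5)*(y^3*w)"
  proof (cases k)
    case 0 then show ?thesis unfolding H_def y_def by simp
  next
    case (Suc i)
    have r2: "(y)^3 * Y = (x+2*y)*(x+2*y+1)*(x+2*y+2) * g (n+1) i"
      using R2[of i n] unfolding Y_def x_def y_def Suc by (simp add: algebra_simps)
    have p2: "(x+2*y) \<noteq> 0" unfolding x_def y_def Suc by (simp add: add_nonneg_eq_0_iff)
    have "y^3*w = y^3*Y/((x+2*y+1)*(x+2*y+2))" unfolding w_def by simp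
    also have "\<dots> = ((x+2*y)*g (n+1) i)*((x+2*y+1)*(x+2*y+2))/((x+2*y+1)*(x+2*y+2))"
      using r2 by (simp add: algebra_simps)
    also have "\<dots> = (x+2*y)*g (n+1) i" using pr by simp
    finally have ee: "(x+2*y)*g (n+1) i = y^3*w" by simp
    have "H n k = -3*(3*x+5)*((x+2*y)*g (n+1) i)" unfolding H_def Suc x_def y_def by simp
    then show ?thesis unfolding ee .
  qed
  have Hk1: "H n (Suc k) = -3*(3*x+5)*(x+2*(y+1))* g (n+1) k"
    unfolding H_def x_def y_def by simp
  show ?thesis
    unfolding Hk Hk1 Z0 Z unfolding Y_def[symmetric] x_def[symmetric] Yw
    using polyG[of x y w] by (simp add: algebra_simps)
qed




lemma sum_ext:
  fixes f :: "nat \<Rightarrow> rat"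
  assumes "n < M" "\<And>k. n < k \<Longrightarrow> f k = 0"
  shows "(\<Sum>k<M. f k) = (\<Sum>k\<le>n. f k)"
  by (rule sum.mono_neutral_right) (use assms in auto)

definition U :: "nat \<Rightarrow> rat" where "U n = (\<Sum>k\<le>n. of_nat (n choose k)^3)"
definition V :: "nat \<Rightarrow> rat" where "V n = (\<Sum>k\<le>n. g n k)"

lemma U_ext: "n < M \<Longrightarrow> U n = (\<Sum>k<M. of_nat (n choose k)^3)"
  unfolding U_def by (rule sum_ext[symmetric]) auto

lemma V_ext: "n < M \<Longrightarrow> V n = (\<Sum>k<M. g n k)"
  unfolding V_def by (rule sum_ext[symmetric]) (auto simp: g_zero)

lemma U_rec: "(of_nat n+2)^2 * U (n+2) - (7*of_nat n^2+21*of_nat n+16) * U (n+1)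
        - 8*(of_nat n+1)^2 * U n = 0"
proof -
  have "(of_nat n+2)^2 * U (n+2) - (7*of_nat n^2+21*of_nat n+16) * U (n+1) - 8*(of_nat n+1)^2 * U n
     = (\<Sum>k<n+3. (of_nat n+2)^2 * of_nat (n+2 choose k)^3 - (7*of_nat n^2+21*of_nat n+16) * of_nat (n+1 choose k)^3
        - 8*(of_nat n+1)^2 * of_nat (n choose k)^3)"
    by (simp add: U_ext[of n "n+3"] U_ext[of "Suc n" "n+3"] U_ext[of "Suc (Suc n)" "n+3"] sum_distrib_left sum_subtractf)
  also have "\<dots> = (\<Sum>k<n+3. GF n (Suc k) - GF n k)"
    by (rule sum.cong) (use franel_step in auto)
  also have "\<dots> = 0" by (simp only: sum_lessThan_telescope) (simp add: GF_def binomial_eq_0 del: binomial_Suc_Suc)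
  finally show ?thesis .
qed

lemma V_rec: "(of_nat n+2)^2 * V (n+2) - (7*of_nat n^2+21*of_nat n+16) * V (n+1)
        - 8*(of_nat n+1)^2 * V n = 0"
proof -
  have "(of_nat n+2)^2 * V (n+2) - (7*of_nat n^2+21*of_nat n+16) * V (n+1) - 8*(of_nat n+1)^2 * V n
     = (\<Sum>k<n+3. (of_nat n+2)^2 * g (n+2) k - (7*of_nat n^2+21*of_nat n+16) * g (n+1) k
        - 8*(of_nat n+1)^2 * g n k)"
    by (simp add: V_ext[of n "n+3"] V_ext[of "Suc n" "n+3"] V_ext[of "Suc (Suc n)" "n+3"] sum_distrib_left sum_subtractf)
  also have "\<dots> = (\<Sum>k<n+3. H n (Suc k) - H n k)"
    by (rule sum.cong) (use g_step in auto)
  also have "\<dots> = 0" by (simp only: sum_lessThan_telescope) (simp add: H_def g_zero)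
  finally show ?thesis .
qed

lemma UV: "U n = V n"
proof -
  have "U n = V n \<and> U (n+1) = V (n+1)"
  proof (induction n)
    case 0
    show ?case unfolding U_def V_def g_def by (simp add: numeral_eq_Suc)
  next
    case (Suc n)
    have nz: "(of_nat n+2::rat)^2 \<noteq> 0" by (simp add: add_nonneg_eq_0_iff)
    have "(of_nat n+2)^2 * U (n+2) = (of_nat n+2)^2 * V (n+2)"
      using U_rec[of n] V_rec[of n] Suc by (simp add: algebra_simps)
    then have "U (n+2) = V (n+2)" using nz by simp
    then show ?case using Suc by simp
  qed
  then show ?thesis by simp
qed

lemma franel_V: "(of_nat (franel n) :: rat) = V n"
  unfolding UV[symmetric] U_def franel_def by (simp add: atMost_atLeast0)




definition tt :: "nat \<Rightarrow> nat \<Rightarrow> rat" where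
 "tt n k = of_nat (n + 2*k choose 3*k) * of_nat (3*k choose k) * of_nat (2*k choose k)
            * (of_nat n * (of_nat k - of_nat n) * (-4) ^ (n - k)) / (8 * (2 * of_nat k + 1))"

definition SS :: "nat \<Rightarrow> rat" where
 "SS n = (\<Sum>m<n. (3 * of_nat m + 1) * (-16) ^ (n - m - 1) * of_nat (2*m choose m) * of_nat (franel m))"

definition RR :: "nat \<Rightarrow> rat" where
 "RR n = of_nat (2*n choose n) * (\<Sum>k<n. tt n k)"

lemma tt_g: "tt n k = g n k * (of_nat n * (of_nat k - of_nat n)) / (8 * (2 * of_nat k + 1))"
  unfolding tt_def g_def by (simp add: algebra_simps)

lemma term_id:
  assumes "k \<le> n+1"
  shows "2*(2*of_nat n+1)/(of_nat n+1) * tt (n+1) k + 16 * tt n k = (3*of_nat n+1) * g n k"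
proof -
  define x where "x = (of_nat n :: rat)"
  define y where "y = (of_nat k :: rat)"
  have r: "of_nat (n+1-k) * g (n+1) k = -4 * (x + 1 + 2 * y) * g n k"
    using R1[of n k] unfolding x_def y_def .
  have o: "(of_nat (n+1-k)::rat) = x+1-y" using assms unfolding x_def y_def by (simp add: of_nat_diff)
  have r': "g (n+1) k * (y - (x+1)) = 4 * (x + 1 + 2 * y) * g n k"
    using r unfolding o by (simp add: algebra_simps)
  have nz: "x+1 \<noteq> 0" "2*y+1 \<noteq> 0" unfolding x_def y_def by (simp_all add: add_nonneg_eq_0_iff)
  have "tt (n+1) k = (g (n+1) k * (y - (x+1))) * (x+1) / (8 * (2 * y + 1))"
    unfolding tt_g x_def y_def by (simp add: algebra_simps)
  also have "\<dots> = 4 * (x + 1 + 2 * y) * g n k * (x+1) / (8 * (2 * y + 1))" unfolding r' ..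
  finally have a: "tt (n+1) k = 4 * (x + 1 + 2 * y) * g n k * (x+1) / (8 * (2 * y + 1))" .
  have b: "tt n k = g n k * (x * (y - x)) / (8 * (2 * y + 1))" unfolding tt_g x_def y_def ..
  define D where "D = 2*y+1"
  have nD: "D \<noteq> 0" using nz unfolding D_def by (simp add: add.commute)
  have canc2: "\<And>A B C e. (e::rat) \<noteq> 0 \<Longrightarrow> A/e * (B*e/C) = A*B/C" by simp
  have q: "2*(2*x+1)/(x+1) * (4 * (x + 1 + 2 * y) * g n k * (x+1) / (8 * D)) = (2*(2*x+1)*(4 * (x + 1 + 2 * y) * g n k)) / (8 * D)"
    by (rule canc2[OF nz(1)])
  have q2: "(2*(2*x+1)*(4 * (x + 1 + 2 * y) * g n k)) / (8 * D) + 16 * (g n k * (x * (y - x)) / (8 * D))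
      = (2*(2*x+1)*(4 * (x + 1 + 2 * y) * g n k) + 16 * (g n k * (x * (y - x)))) / (8 * D)"
    by (simp add: add_divide_distrib)
  have q3: "(2*(2*x+1)*(4 * (x + 1 + 2 * y) * g n k) + 16 * (g n k * (x * (y - x)))) = ((3*x+1) * g n k) * (8 * D)"
    unfolding D_def by algebra
  show ?thesis unfolding a b x_def[symmetric] D_def[symmetric] q q2 q3 using nD by simp
qed

lemma central: "(of_nat (2*(n+1) choose (n+1)) :: rat) = 2*(2*of_nat n+1)/(of_nat n+1) * of_nat (2*n choose n)"
proof -
  have a: "Suc n * (Suc (2*n+1) choose Suc n) = Suc (2*n+1) * ((2*n+1) choose n)"
    by (rule Suc_times_binomial)
  have b: "(2*n+1 - n) * (2*n+1 choose n) = (2*n+1) * ((2*n+1-1) choose n)"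
    by (rule binomial_absorb_comp)
  have b': "(n+1) * (2*n+1 choose n) = (2*n+1) * (2*n choose n)" using b
    by (metis add_diff_cancel_left' add_diff_cancel_right' mult_2 Suc_eq_plus1 Nat.diff_add_assoc le_add2 add.commute)
  have "(n+1) * (2*(n+1) choose (n+1)) = 2*(2*n+1) * (2*n choose n)"
  proof -
    have "(n+1) * (2*(n+1) choose (n+1)) = 2 * ((n+1) * (2*n+1 choose n))"
      using a by (simp add: algebra_simps)
    also have "\<dots> = 2 * ((2*n+1) * (2*n choose n))" by (simp only: b')
    also have "\<dots> = 2*(2*n+1) * (2*n choose n)" by simp
    finally show ?thesis .
  qed
  then have "(of_nat n + 1 :: rat) * of_nat (2*(n+1) choose (n+1)) = 2*(2*of_nat n+1) * of_nat (2*n choose n)"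
    by (metis (mono_tags, lifting) of_nat_1 of_nat_add of_nat_mult of_nat_numeral)
  moreover have "(of_nat n + 1 :: rat) \<noteq> 0" by (simp add: add_nonneg_eq_0_iff)
  ultimately show ?thesis by (simp add: field_simps)
qed

lemma RR_step: "RR (n+1) + 16 * RR n = (3*of_nat n+1) * of_nat (2*n choose n) * of_nat (franel n)"
proof -
  define C where "C = (of_nat (2*n choose n) :: rat)"
  define c where "c = 2*(2*of_nat n+1)/(of_nat n+1 :: rat)"
  have s1: "(\<Sum>k<n+1. tt (n+1) k) = (\<Sum>k<n+2. tt (n+1) k)"
    by (simp add: tt_def)
  have s2: "(\<Sum>k<n. tt n k) = (\<Sum>k<n+2. tt n k)"
    by (simp add: tt_def binomial_eq_0)
  have "RR (n+1) + 16 * RR n = C * (c * (\<Sum>k<n+2. tt (n+1) k) + 16 * (\<Sum>k<n+2. tt n k))"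
    unfolding RR_def central s1 s2 C_def[symmetric] c_def[symmetric] by (simp add: algebra_simps)
  also have "\<dots> = C * (\<Sum>k<n+2. c * tt (n+1) k + 16 * tt n k)"
    by (simp only: sum.distrib sum_distrib_left)
  also have "\<dots> = C * (\<Sum>k<n+2. (3*of_nat n+1) * g n k)"
    unfolding c_def by (rule arg_cong[where f="\<lambda>z. _ * z"], rule sum.cong) (use term_id in auto)
  also have "\<dots> = (3*of_nat n+1) * C * V n"
  proof -
    have v: "V n = (\<Sum>k<n+2. g n k)" by (rule V_ext) simp
    show ?thesis unfolding v sum_distrib_left[symmetric] by (simp only: ac_simps)
  qed
  finally show ?thesis unfolding franel_V C_def .
qed

lemma SS_step: "SS (n+1) = -16 * SS n + (3*of_nat n+1) * of_nat (2*n choose n) * of_nat (franel n)"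
proof -
  have "SS (n+1) = (\<Sum>m<n. (3 * of_nat m + 1) * (-16) ^ (n + 1 - m - 1) * of_nat (2*m choose m) * of_nat (franel m))
     + (3*of_nat n+1) * of_nat (2*n choose n) * of_nat (franel n)"
    unfolding SS_def by simp
  also have "(\<Sum>m<n. (3 * of_nat m + 1) * (-16) ^ (n + 1 - m - 1) * of_nat (2*m choose m) * (of_nat (franel m)::rat))
      = (\<Sum>m<n. -16 * ((3 * of_nat m + 1) * (-16) ^ (n - m - 1) * of_nat (2*m choose m) * (of_nat (franel m)::rat)))"
  proof (rule sum.cong[OF refl])
    fix m assume "m \<in> {..<n}"
    then have "n + 1 - m - 1 = Suc (n - m - 1)" by auto
    then show "(3 * of_nat m + 1) * (-16) ^ (n + 1 - m - 1) * of_nat (2*m choose m) * of_nat (franel m)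
       = -16 * ((3 * of_nat m + 1) * (-16) ^ (n - m - 1) * of_nat (2*m choose m) * (of_nat (franel m)::rat))"
      by simp
  qed
  finally show ?thesis unfolding SS_def by (simp add: sum_distrib_left)
qed

lemma SS_RR: "SS n = RR n"
proof (induction n)
  case 0 show ?case unfolding SS_def RR_def by simp
next
  case (Suc n)
  have "RR (n+1) = -16 * RR n + (3*of_nat n+1) * of_nat (2*n choose n) * of_nat (franel n)"
    using RR_step[of n] by (simp add: algebra_simps)
  then show ?case using SS_step[of n] Suc by simp
qed

theorem mainTheorem6:
  fixes n :: nat
  assumes "n \<ge> 1"
  shows "(\<Sum>m=0..n-1. (3 * of_nat m + 1) * (-16) ^ (n - m - 1) * of_nat (2*m choose m) * of_nat (franel m))
       = of_nat (2*n choose n) * (\<Sum>k=0..n-1. of_nat (n + 2*k choose 3*k) * of_nat (3*k choose k) * of_nat (2*k choose k)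
            * (of_nat n * (of_nat k - of_nat n) * (-4) ^ (n - k)) / (8 * (2 * of_nat k + 1)) :: rat)"
proof -
  have iv: "{0..n-1} = {..<n}" using assms by auto
  show ?thesis using SS_RR[of n] unfolding SS_def RR_def tt_def iv .
qed


end
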